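(* If $(a_{ij})\in\mathbb P^9$ satisfies the five Plücker relations and the superintegrability conditions (SIC), then the polynomial $D(z,w)$ decomposes over $\mathbb C$ into a product of polynomials of degree at most one in $z,w$.
   Context: Homogeneous coordinates $a_{ij}$ ($i,j\ge0$, $i+j\le3$) on $\mathbb P^9$. Define $D(z,w)=\sum_{0\le i,j\le2,(i,j)\ne(2,2)}a_{ij}z^iw^j$ (a cubic with no $z^3,w^3,z^2w^2$ terms), $A_z(w)=a_{21}w^2+2a_{20}w+a_{30}$, $B_w(z)=a_{12}z^2+2a_{02}z+a_{03}$ (names of polynomials; subscripts on $D$ are partial derivatives). Plücker relations: $a_{03}a_{21}-a_{02}a_{11}+a_{01}a_{12}=0$, $a_{03}a_{20}-a_{02}a_{10}+a_{00}a_{12}=0$, $a_{03}a_{30}-a_{01}a_{10}+a_{00}a_{11}=0$, $a_{02}a_{30}-a_{01}a_{20}+a_{00}a_{21}=0$, $a_{12}a_{30}-a_{11}a_{20}+a_{10}a_{21}=0$. (SIC): the polynomial identities $3A_zDD_{ww}-2A_zB_wD_z-2A_zD_w^2+DD_wD_{zz}=0$, $3B_wDD_{zz}-2A_zB_wD_w-2B_wD_z^2+DD_zD_{ww}=0$, $2D^2D_{zz}D_{ww}-B_wDD_zD_{zz}-A_zDD_wD_{ww}-A_zB_wD_zD_w+A_z^2B_w^2=0$ in $\mathbb C[z,w]$. *)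

theory Defs
  imports "HOL-Analysis.Analysis"
begin

text \<open>Homogeneous coordinates a i j (i,j >= 0, i+j <= 3) of a point of P^9 are
modelled by a function a :: nat => nat => complex; only entries with i+j <= 3 matter.
Polynomials in C[z,w] are represented by their polynomial functions C x C -> C
(equivalent, as C is infinite).\<close>

definition proj_point :: "(nat \<Rightarrow> nat \<Rightarrow> complex) \<Rightarrow> bool" where
  "proj_point a \<longleftrightarrow> (\<exists>i j. i + j \<le> 3 \<and> a i j \<noteq> 0)"

definition pluecker :: "(nat \<Rightarrow> nat \<Rightarrow> complex) \<Rightarrow> bool" where
  "pluecker a \<longleftrightarrow>
     a 0 3 * a 2 1 - a 0 2 * a 1 1 + a 0 1 * a 1 2 = 0 \<and>
     a 0 3 * a 2 0 - a 0 2 * a 1 0 + a 0 0 * a 1 2 = 0 \<and>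
     a 0 3 * a 3 0 - a 0 1 * a 1 0 + a 0 0 * a 1 1 = 0 \<and>
     a 0 2 * a 3 0 - a 0 1 * a 2 0 + a 0 0 * a 2 1 = 0 \<and>
     a 1 2 * a 3 0 - a 1 1 * a 2 0 + a 1 0 * a 2 1 = 0"

definition Dpol :: "(nat \<Rightarrow> nat \<Rightarrow> complex) \<Rightarrow> complex \<Rightarrow> complex \<Rightarrow> complex" where
  "Dpol a z w = (\<Sum>(i,j)\<in>{(i,j). i \<le> 2 \<and> j \<le> 2 \<and> (i,j) \<noteq> (2,2)}. a i j * z ^ i * w ^ j)"

definition Dz :: "(nat \<Rightarrow> nat \<Rightarrow> complex) \<Rightarrow> complex \<Rightarrow> complex \<Rightarrow> complex" where
  "Dz a z w = deriv (\<lambda>t. Dpol a t w) z"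
definition Dw :: "(nat \<Rightarrow> nat \<Rightarrow> complex) \<Rightarrow> complex \<Rightarrow> complex \<Rightarrow> complex" where
  "Dw a z w = deriv (\<lambda>t. Dpol a z t) w"
definition Dzz :: "(nat \<Rightarrow> nat \<Rightarrow> complex) \<Rightarrow> complex \<Rightarrow> complex \<Rightarrow> complex" where
  "Dzz a z w = deriv (\<lambda>t. Dz a t w) z"
definition Dww :: "(nat \<Rightarrow> nat \<Rightarrow> complex) \<Rightarrow> complex \<Rightarrow> complex \<Rightarrow> complex" where
  "Dww a z w = deriv (\<lambda>t. Dw a z t) w"

definition Az :: "(nat \<Rightarrow> nat \<Rightarrow> complex) \<Rightarrow> complex \<Rightarrow> complex" where
  "Az a w = a 2 1 * w ^ 2 + 2 * a 2 0 * w + a 3 0"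
definition Bw :: "(nat \<Rightarrow> nat \<Rightarrow> complex) \<Rightarrow> complex \<Rightarrow> complex" where
  "Bw a z = a 1 2 * z ^ 2 + 2 * a 0 2 * z + a 0 3"

definition SIC :: "(nat \<Rightarrow> nat \<Rightarrow> complex) \<Rightarrow> bool" where
  "SIC a \<longleftrightarrow> (\<forall>z w.
     3 * Az a w * Dpol a z w * Dww a z w - 2 * Az a w * Bw a z * Dz a z w
       - 2 * Az a w * (Dw a z w)^2 + Dpol a z w * Dw a z w * Dzz a z w = 0 \<and>
     3 * Bw a z * Dpol a z w * Dzz a z w - 2 * Az a w * Bw a z * Dw a z w
       - 2 * Bw a z * (Dz a z w)^2 + Dpol a z w * Dz a z w * Dww a z w = 0 \<and>
     2 * (Dpol a z w)^2 * Dzz a z w * Dww a z w - Bw a z * Dpol a z w * Dz a z w * Dzz a z w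
       - Az a w * Dpol a z w * Dw a z w * Dww a z w - Az a w * Bw a z * Dz a z w * Dw a z w
       + (Az a w)^2 * (Bw a z)^2 = 0)"

definition linear_product :: "(complex \<Rightarrow> complex \<Rightarrow> complex) \<Rightarrow> bool" where
  "linear_product f \<longleftrightarrow> (\<exists>fs :: (complex \<times> complex \<times> complex) list.
     \<forall>z w. f z w = (\<Prod>(c0,c1,c2)\<leftarrow>fs. c0 + c1 * z + c2 * w))"

end

theory Submission imports Defs "HOL-Computational_Algebra.Polynomial" begin

lemma poly5:
  fixes c0 c1 c2 c3 c4 :: complex
  assumes "\<And>z. c0 + z*(c1 + z*(c2 + z*(c3 + z*(c4)))) = 0"
  shows "c0 = 0 \<and> c1 = 0 \<and> c2 = 0 \<and> c3 = 0 \<and> c4 = 0"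
proof -
  have "\<forall>z. poly [:c0,c1,c2,c3,c4:] z = 0" using assms by simp
  hence "[:c0,c1,c2,c3,c4:] = 0" using poly_all_0_iff_0 by blast
  thus ?thesis by simp
qed

lemma E1_coeffs:
  fixes x00 x10 x01 x20 x11 x02 x30 x21 x12 x03 :: complex
  assumes h: "\<And>z w. 3*(x21*w^2 + 2*x20*w + x30)*(x00 + x10*z + x01*w + x20*z^2 + x11*z*w + x02*w^2 + x21*z^2*w + x12*z*w^2)*(2*x02 + 2*x12*z) - 2*(x21*w^2 + 2*x20*w + x30)*(x12*z^2 + 2*x02*z + x03)*(x10 + 2*x20*z + x11*w + 2*x21*z*w + x12*w^2) - 2*(x21*w^2 + 2*x20*w + x30)*(x01 + x11*z + 2*x02*w + x21*z^2 + 2*x12*z*w)^2 + (x00 + x10*z + x01*w + x20*z^2 + x11*z*w + x02*w^2 + x21*z^2*w + x12*z*w^2)*(x01 + x11*z + 2*x02*w + x21*z^2 + 2*x12*z*w)*(2*x20 + 2*x21*w) = 0"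
  shows "(2*x00*x01*x20 + 6*x00*x02*x30 - 2*x10*x30*x03 - 2*x01^2*x30) = 0 \<and> (2*x00*x01*x21 + 16*x00*x20*x02 - 4*x10*x20*x03 - 2*x01^2*x20 - 2*x01*x02*x30 - 2*x11*x30*x03) = 0 \<and> (10*x00*x02*x21 - 2*x10*x21*x03 + 2*x01*x20*x02 - 4*x20*x11*x03 - 2*x02^2*x30 - 2*x30*x12*x03) = 0 \<and> (4*x01*x02*x21 - 4*x20*x12*x03 - 2*x11*x21*x03) = 0 \<and> (2*x02^2*x21 - 2*x21*x12*x03) = 0 \<and> (2*x00*x20*x11 + 6*x00*x30*x12 + 2*x10*x01*x20 + 2*x10*x02*x30 - 4*x01*x11*x30 - 4*x20*x30*x03) = 0 \<and> (16*x00*x20*x12 + 2*x00*x11*x21 + 2*x10*x01*x21 + 8*x10*x20*x02 - 4*x01*x20*x11 - 2*x01*x30*x12 - 8*x20^2*x03 - 6*x11*x02*x30 - 4*x30*x21*x03) = 0 \<and> (10*x00*x21*x12 + 6*x10*x02*x21 + 2*x01*x20*x12 - 6*x20*x11*x02 - 12*x20*x21*x03 - 8*x02*x30*x12) = 0 \<and> (4*x01*x21*x12 - 8*x20*x02*x12 - 4*x21^2*x03) = 0 \<and> (2*x00*x20*x21 + 2*x10*x20*x11 + 4*x10*x30*x12 + 2*x01*x20^2 - 4*x01*x30*x21 - 2*x20*x02*x30 - 2*x11^2*x30) = 0 \<and> (2*x00*x21^2 + 12*x10*x20*x12 + 2*x10*x11*x21 - 2*x01*x20*x21 - 2*x20*x11^2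 - 4*x11*x30*x12 - 10*x02*x30*x21) = 0 \<and> (8*x10*x21*x12 - 2*x20*x11*x12 - 12*x20*x02*x21 - 4*x30*x12^2) = 0 \<and> (- 4*x20*x12^2 + 2*x11*x21*x12 - 4*x02*x21^2) = 0 \<and> (2*x10*x20*x21 + 2*x20^2*x11 + 2*x20*x30*x12 - 4*x11*x30*x21) = 0 \<and> (2*x10*x21^2 + 8*x20^2*x12 - 2*x20*x11*x21 - 6*x30*x21*x12) = 0 \<and> (2*x20^2*x21 - 2*x30*x21^2) = 0"
proof -
  have dec: "\<And>z w. 3*(x21*w^2 + 2*x20*w + x30)*(x00 + x10*z + x01*w + x20*z^2 + x11*z*w + x02*w^2 + x21*z^2*w + x12*z*w^2)*(2*x02 + 2*x12*z) - 2*(x21*w^2 + 2*x20*w + x30)*(x12*z^2 + 2*x02*z + x03)*(x10 + 2*x20*z + x11*w + 2*x21*z*w + x12*w^2) - 2*(x21*w^2 + 2*x20*w + x30)*(x01 + x11*z + 2*x02*w + x21*z^2 + 2*x12*z*w)^2 + (x00 + x10*z + x01*w + x20*z^2 + x11*z*w + x02*w^2 + x21*z^2*w + x12*z*w^2)*(x01 + x11*z + 2*x02*w + x21*z^2 + 2*x12*z*w)*(2*x20 + 2*x21*w) = ((2*x00*x01*x20 + 6*x00*x02*x30 - 2*x10*x30*x03 - 2*x01^2*x30) + w*((2*x00*x01*x21 + 16*x00*x20*x02 - 4*x10*x20*x03 - 2*x01^2*x20 - 2*x01*x02*x30 - 2*x11*x30*x03) + w*((10*x00*x02*x21 - 2*x10*x21*x03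 + 2*x01*x20*x02 - 4*x20*x11*x03 - 2*x02^2*x30 - 2*x30*x12*x03) + w*((4*x01*x02*x21 - 4*x20*x12*x03 - 2*x11*x21*x03) + w*((2*x02^2*x21 - 2*x21*x12*x03)))))) + z*(((2*x00*x20*x11 + 6*x00*x30*x12 + 2*x10*x01*x20 + 2*x10*x02*x30 - 4*x01*x11*x30 - 4*x20*x30*x03) + w*((16*x00*x20*x12 + 2*x00*x11*x21 + 2*x10*x01*x21 + 8*x10*x20*x02 - 4*x01*x20*x11 - 2*x01*x30*x12 - 8*x20^2*x03 - 6*x11*x02*x30 - 4*x30*x21*x03) + w*((10*x00*x21*x12 + 6*x10*x02*x21 + 2*x01*x20*x12 - 6*x20*x11*x02 - 12*x20*x21*x03 - 8*x02*x30*x12) + w*((4*x01*x21*x12 - 8*x20*x02*x12 - 4*x21^2*x03) + w*(0))))) + z*(((2*x00*x20*x21 + 2*x10*x20*x11 + 4*x10*x30*x12 + 2*x01*x20^2 - 4*x01*x30*x21 - 2*x20*x02*x30 - 2*x11^2*x30) + w*((2*x00*x21^2 + 12*x10*x20*x12 + 2*x10*x11*x21 - 2*x01*x20*x21 - 2*x20*x11^2 - 4*x11*x30*x12 - 10*x02*x30*x21) + w*((8*x10*x21*x12 - 2*x20*x11*x12 - 12*x20*x02*x21 - 4*x30*x12^2) + w*((- 4*x20*x12^2 + 2*x11*x21*x12 - 4*x02*x21^2) + w*(0))))) + z*(((2*x10*x20*x21 + 2*x20^2*x11 + 2*x20*x30*x12 - 4*x11*x30*x21) + w*((2*x10*x21^2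 + 8*x20^2*x12 - 2*x20*x11*x21 - 6*x30*x21*x12) + w*(0 + w*(0 + w*(0))))) + z*(((2*x20^2*x21 - 2*x30*x21^2) + w*(0 + w*(0 + w*(0 + w*(0)))))))))"
    by algebra
  have hz: "\<And>z w. ((2*x00*x01*x20 + 6*x00*x02*x30 - 2*x10*x30*x03 - 2*x01^2*x30) + w*((2*x00*x01*x21 + 16*x00*x20*x02 - 4*x10*x20*x03 - 2*x01^2*x20 - 2*x01*x02*x30 - 2*x11*x30*x03) + w*((10*x00*x02*x21 - 2*x10*x21*x03 + 2*x01*x20*x02 - 4*x20*x11*x03 - 2*x02^2*x30 - 2*x30*x12*x03) + w*((4*x01*x02*x21 - 4*x20*x12*x03 - 2*x11*x21*x03) + w*((2*x02^2*x21 - 2*x21*x12*x03)))))) + z*(((2*x00*x20*x11 + 6*x00*x30*x12 + 2*x10*x01*x20 + 2*x10*x02*x30 - 4*x01*x11*x30 - 4*x20*x30*x03) + w*((16*x00*x20*x12 + 2*x00*x11*x21 + 2*x10*x01*x21 + 8*x10*x20*x02 - 4*x01*x20*x11 - 2*x01*x30*x12 - 8*x20^2*x03 - 6*x11*x02*x30 - 4*x30*x21*x03) + w*((10*x00*x21*x12 + 6*x10*x02*x21 + 2*x01*x20*x12 - 6*x20*x11*x02 - 12*x20*x21*x03 - 8*x02*x30*x12) + w*((4*x01*x21*x12 - 8*x20*x02*x12 - 4*x21^2*x03) + w*(0))))) + z*(((2*x00*x20*x21 + 2*x10*x20*x11 + 4*x10*x30*x12 + 2*x01*x20^2 - 4*x01*x30*x21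 - 2*x20*x02*x30 - 2*x11^2*x30) + w*((2*x00*x21^2 + 12*x10*x20*x12 + 2*x10*x11*x21 - 2*x01*x20*x21 - 2*x20*x11^2 - 4*x11*x30*x12 - 10*x02*x30*x21) + w*((8*x10*x21*x12 - 2*x20*x11*x12 - 12*x20*x02*x21 - 4*x30*x12^2) + w*((- 4*x20*x12^2 + 2*x11*x21*x12 - 4*x02*x21^2) + w*(0))))) + z*(((2*x10*x20*x21 + 2*x20^2*x11 + 2*x20*x30*x12 - 4*x11*x30*x21) + w*((2*x10*x21^2 + 8*x20^2*x12 - 2*x20*x11*x21 - 6*x30*x21*x12) + w*(0 + w*(0 + w*(0))))) + z*(((2*x20^2*x21 - 2*x30*x21^2) + w*(0 + w*(0 + w*(0 + w*(0))))))))) = 0" using h dec by metis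
  have "\<And>w. ((2*x00*x01*x20 + 6*x00*x02*x30 - 2*x10*x30*x03 - 2*x01^2*x30) + w*((2*x00*x01*x21 + 16*x00*x20*x02 - 4*x10*x20*x03 - 2*x01^2*x20 - 2*x01*x02*x30 - 2*x11*x30*x03) + w*((10*x00*x02*x21 - 2*x10*x21*x03 + 2*x01*x20*x02 - 4*x20*x11*x03 - 2*x02^2*x30 - 2*x30*x12*x03) + w*((4*x01*x02*x21 - 4*x20*x12*x03 - 2*x11*x21*x03) + w*((2*x02^2*x21 - 2*x21*x12*x03)))))) = 0 \<and> ((2*x00*x20*x11 + 6*x00*x30*x12 + 2*x10*x01*x20 + 2*x10*x02*x30 - 4*x01*x11*x30 - 4*x20*x30*x03) + w*((16*x00*x20*x12 + 2*x00*x11*x21 + 2*x10*x01*x21 + 8*x10*x20*x02 - 4*x01*x20*x11 - 2*x01*x30*x12 - 8*x20^2*x03 - 6*x11*x02*x30 - 4*x30*x21*x03) + w*((10*x00*x21*x12 + 6*x10*x02*x21 + 2*x01*x20*x12 - 6*x20*x11*x02 - 12*x20*x21*x03 - 8*x02*x30*x12) + w*((4*x01*x21*x12 - 8*x20*x02*x12 - 4*x21^2*x03) + w*(0))))) = 0 \<and> ((2*x00*x20*x21 + 2*x10*x20*x11 + 4*x10*x30*x12 + 2*x01*x20^2 - 4*x01*x30*x21 - 2*x20*x02*x30 - 2*x11^2*x30) + w*((2*x00*x21^2 + 12*x10*x20*x12 + 2*x10*x11*x21 - 2*x01*x20*x21 - 2*x20*x11^2 - 4*x11*x30*x12 - 10*x02*x30*x21)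 + w*((8*x10*x21*x12 - 2*x20*x11*x12 - 12*x20*x02*x21 - 4*x30*x12^2) + w*((- 4*x20*x12^2 + 2*x11*x21*x12 - 4*x02*x21^2) + w*(0))))) = 0 \<and> ((2*x10*x20*x21 + 2*x20^2*x11 + 2*x20*x30*x12 - 4*x11*x30*x21) + w*((2*x10*x21^2 + 8*x20^2*x12 - 2*x20*x11*x21 - 6*x30*x21*x12) + w*(0 + w*(0 + w*(0))))) = 0 \<and> ((2*x20^2*x21 - 2*x30*x21^2) + w*(0 + w*(0 + w*(0 + w*(0))))) = 0"
    by (rule poly5, rule hz)
  hence "\<And>w. ((2*x00*x01*x20 + 6*x00*x02*x30 - 2*x10*x30*x03 - 2*x01^2*x30) + w*((2*x00*x01*x21 + 16*x00*x20*x02 - 4*x10*x20*x03 - 2*x01^2*x20 - 2*x01*x02*x30 - 2*x11*x30*x03) + w*((10*x00*x02*x21 - 2*x10*x21*x03 + 2*x01*x20*x02 - 4*x20*x11*x03 - 2*x02^2*x30 - 2*x30*x12*x03) + w*((4*x01*x02*x21 - 4*x20*x12*x03 - 2*x11*x21*x03) + w*((2*x02^2*x21 - 2*x21*x12*x03)))))) = 0" "\<And>w. ((2*x00*x20*x11 + 6*x00*x30*x12 + 2*x10*x01*x20 + 2*x10*x02*x30 - 4*x01*x11*x30 - 4*x20*x30*x03) + w*((16*x00*x20*x12 + 2*x00*x11*x21 + 2*x10*x01*x21 + 8*x10*x20*x02 - 4*x01*x20*x11 - 2*x01*x30*x12 - 8*x20^2*x03 - 6*x11*x02*x30 - 4*x30*x21*x03)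 + w*((10*x00*x21*x12 + 6*x10*x02*x21 + 2*x01*x20*x12 - 6*x20*x11*x02 - 12*x20*x21*x03 - 8*x02*x30*x12) + w*((4*x01*x21*x12 - 8*x20*x02*x12 - 4*x21^2*x03) + w*(0))))) = 0" "\<And>w. ((2*x00*x20*x21 + 2*x10*x20*x11 + 4*x10*x30*x12 + 2*x01*x20^2 - 4*x01*x30*x21 - 2*x20*x02*x30 - 2*x11^2*x30) + w*((2*x00*x21^2 + 12*x10*x20*x12 + 2*x10*x11*x21 - 2*x01*x20*x21 - 2*x20*x11^2 - 4*x11*x30*x12 - 10*x02*x30*x21) + w*((8*x10*x21*x12 - 2*x20*x11*x12 - 12*x20*x02*x21 - 4*x30*x12^2) + w*((- 4*x20*x12^2 + 2*x11*x21*x12 - 4*x02*x21^2) + w*(0))))) = 0" "\<And>w. ((2*x10*x20*x21 + 2*x20^2*x11 + 2*x20*x30*x12 - 4*x11*x30*x21) + w*((2*x10*x21^2 + 8*x20^2*x12 - 2*x20*x11*x21 - 6*x30*x21*x12) + w*(0 + w*(0 + w*(0))))) = 0" "\<And>w. ((2*x20^2*x21 - 2*x30*x21^2) + w*(0 + w*(0 + w*(0 + w*(0))))) = 0" by auto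
  from this[THEN poly5] show ?thesis by simp
qed

lemma E2_coeffs:
  fixes x00 x10 x01 x20 x11 x02 x30 x21 x12 x03 :: complex
  assumes h: "\<And>z w. 3*(x12*z^2 + 2*x02*z + x03)*(x00 + x10*z + x01*w + x20*z^2 + x11*z*w + x02*w^2 + x21*z^2*w + x12*z*w^2)*(2*x20 + 2*x21*w) - 2*(x21*w^2 + 2*x20*w + x30)*(x12*z^2 + 2*x02*z + x03)*(x01 + x11*z + 2*x02*w + x21*z^2 + 2*x12*z*w) - 2*(x12*z^2 + 2*x02*z + x03)*(x10 + 2*x20*z + x11*w + 2*x21*z*w + x12*w^2)^2 + (x00 + x10*z + x01*w + x20*z^2 + x11*z*w + x02*w^2 + x21*z^2*w + x12*z*w^2)*(x10 + 2*x20*z + x11*w + 2*x21*z*w + x12*w^2)*(2*x02 + 2*x12*z) = 0"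
  shows "(2*x00*x10*x02 + 6*x00*x20*x03 - 2*x10^2*x03 - 2*x01*x30*x03) = 0 \<and> (2*x00*x11*x02 + 6*x00*x21*x03 + 2*x10*x01*x02 - 4*x10*x11*x03 + 2*x01*x20*x03 - 4*x02*x30*x03) = 0 \<and> (2*x00*x02*x12 + 2*x10*x02^2 - 4*x10*x12*x03 + 2*x01*x11*x02 + 4*x01*x21*x03 - 2*x20*x02*x03 - 2*x11^2*x03) = 0 \<and> (2*x01*x02*x12 + 2*x11*x02^2 - 4*x11*x12*x03 + 2*x02*x21*x03) = 0 \<and> (2*x02^2*x12 - 2*x12^2*x03) = 0 \<and> (2*x00*x10*x12 + 16*x00*x20*x02 - 2*x10^2*x02 - 2*x10*x20*x03 - 4*x01*x02*x30 - 2*x11*x30*x03) = 0 \<and> (2*x00*x11*x12 + 16*x00*x02*x21 + 2*x10*x01*x12 - 4*x10*x11*x02 - 2*x10*x21*x03 + 8*x01*x20*x02 - 6*x20*x11*x03 - 8*x02^2*x30 - 4*x30*x12*x03) = 0 \<and> (2*x00*x12^2 - 2*x10*x02*x12 + 2*x01*x11*x12 + 12*x01*x02*x21 - 10*x20*x12*x03 - 2*x11^2*x02 - 4*x11*x21*x03) = 0 \<and> (2*x01*x12^2 - 2*x11*x02*x12 + 8*x02^2*x21 - 6*x21*x12*x03) = 0 \<and> (10*x00*x20*x12 + 2*x10*x20*x02 - 2*x01*x30*x12 - 2*x20^2*x03 - 4*x11*x02*x30 - 2*x30*x21*x03) = 0 \<and> (10*x00*x21*x12 + 2*x10*x02*x21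 + 6*x01*x20*x12 - 6*x20*x11*x02 - 8*x20*x21*x03 - 12*x02*x30*x12) = 0 \<and> (8*x01*x21*x12 - 12*x20*x02*x12 - 2*x11*x02*x21 - 4*x21^2*x03) = 0 \<and> (4*x10*x20*x12 - 2*x11*x30*x12 - 4*x02*x30*x21) = 0 \<and> (4*x10*x21*x12 - 8*x20*x02*x21 - 4*x30*x12^2) = 0 \<and> (- 4*x20*x12^2 + 2*x11*x21*x12 - 4*x02*x21^2) = 0 \<and> (2*x20^2*x12 - 2*x30*x21*x12) = 0"
proof -
  have dec: "\<And>z w. 3*(x12*z^2 + 2*x02*z + x03)*(x00 + x10*z + x01*w + x20*z^2 + x11*z*w + x02*w^2 + x21*z^2*w + x12*z*w^2)*(2*x20 + 2*x21*w) - 2*(x21*w^2 + 2*x20*w + x30)*(x12*z^2 + 2*x02*z + x03)*(x01 + x11*z + 2*x02*w + x21*z^2 + 2*x12*z*w) - 2*(x12*z^2 + 2*x02*z + x03)*(x10 + 2*x20*z + x11*w + 2*x21*z*w + x12*w^2)^2 + (x00 + x10*z + x01*w + x20*z^2 + x11*z*w + x02*w^2 + x21*z^2*w + x12*z*w^2)*(x10 + 2*x20*z + x11*w + 2*x21*z*w + x12*w^2)*(2*x02 + 2*x12*z) = ((2*x00*x10*x02 + 6*x00*x20*x03 - 2*x10^2*x03 - 2*x01*x30*x03) + w*((2*x00*x11*x02 + 6*x00*x21*x03 + 2*x10*x01*x02 - 4*x10*x11*x03 + 2*x01*x20*x03 - 4*x02*x30*x03) + w*((2*x00*x02*x12 +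 2*x10*x02^2 - 4*x10*x12*x03 + 2*x01*x11*x02 + 4*x01*x21*x03 - 2*x20*x02*x03 - 2*x11^2*x03) + w*((2*x01*x02*x12 + 2*x11*x02^2 - 4*x11*x12*x03 + 2*x02*x21*x03) + w*((2*x02^2*x12 - 2*x12^2*x03)))))) + z*(((2*x00*x10*x12 + 16*x00*x20*x02 - 2*x10^2*x02 - 2*x10*x20*x03 - 4*x01*x02*x30 - 2*x11*x30*x03) + w*((2*x00*x11*x12 + 16*x00*x02*x21 + 2*x10*x01*x12 - 4*x10*x11*x02 - 2*x10*x21*x03 + 8*x01*x20*x02 - 6*x20*x11*x03 - 8*x02^2*x30 - 4*x30*x12*x03) + w*((2*x00*x12^2 - 2*x10*x02*x12 + 2*x01*x11*x12 + 12*x01*x02*x21 - 10*x20*x12*x03 - 2*x11^2*x02 - 4*x11*x21*x03) + w*((2*x01*x12^2 - 2*x11*x02*x12 + 8*x02^2*x21 - 6*x21*x12*x03) + w*(0))))) + z*(((10*x00*x20*x12 + 2*x10*x20*x02 - 2*x01*x30*x12 - 2*x20^2*x03 - 4*x11*x02*x30 - 2*x30*x21*x03) + w*((10*x00*x21*x12 + 2*x10*x02*x21 + 6*x01*x20*x12 - 6*x20*x11*x02 - 8*x20*x21*x03 - 12*x02*x30*x12) + w*((8*x01*x21*x12 - 12*x20*x02*x12 - 2*x11*x02*x21 - 4*x21^2*x03) + w*(0 + w*(0))))) + z*(((4*x10*x20*x12 - 2*x11*x30*x12 - 4*x02*x30*x21) + w*((4*x10*x21*x12 - 8*x20*x02*x21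 - 4*x30*x12^2) + w*((- 4*x20*x12^2 + 2*x11*x21*x12 - 4*x02*x21^2) + w*(0 + w*(0))))) + z*(((2*x20^2*x12 - 2*x30*x21*x12) + w*(0 + w*(0 + w*(0 + w*(0)))))))))"
    by algebra
  have hz: "\<And>z w. ((2*x00*x10*x02 + 6*x00*x20*x03 - 2*x10^2*x03 - 2*x01*x30*x03) + w*((2*x00*x11*x02 + 6*x00*x21*x03 + 2*x10*x01*x02 - 4*x10*x11*x03 + 2*x01*x20*x03 - 4*x02*x30*x03) + w*((2*x00*x02*x12 + 2*x10*x02^2 - 4*x10*x12*x03 + 2*x01*x11*x02 + 4*x01*x21*x03 - 2*x20*x02*x03 - 2*x11^2*x03) + w*((2*x01*x02*x12 + 2*x11*x02^2 - 4*x11*x12*x03 + 2*x02*x21*x03) + w*((2*x02^2*x12 - 2*x12^2*x03)))))) + z*(((2*x00*x10*x12 + 16*x00*x20*x02 - 2*x10^2*x02 - 2*x10*x20*x03 - 4*x01*x02*x30 - 2*x11*x30*x03) + w*((2*x00*x11*x12 + 16*x00*x02*x21 + 2*x10*x01*x12 - 4*x10*x11*x02 - 2*x10*x21*x03 + 8*x01*x20*x02 - 6*x20*x11*x03 - 8*x02^2*x30 - 4*x30*x12*x03) + w*((2*x00*x12^2 - 2*x10*x02*x12 + 2*x01*x11*x12 + 12*x01*x02*x21 - 10*x20*x12*x03 - 2*x11^2*x02 - 4*x11*x21*x03) + w*((2*x01*x12^2 - 2*x11*x02*x12 + 8*x02^2*x21 - 6*x21*x12*x03) + w*(0))))) + z*(((10*x00*x20*x12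 + 2*x10*x20*x02 - 2*x01*x30*x12 - 2*x20^2*x03 - 4*x11*x02*x30 - 2*x30*x21*x03) + w*((10*x00*x21*x12 + 2*x10*x02*x21 + 6*x01*x20*x12 - 6*x20*x11*x02 - 8*x20*x21*x03 - 12*x02*x30*x12) + w*((8*x01*x21*x12 - 12*x20*x02*x12 - 2*x11*x02*x21 - 4*x21^2*x03) + w*(0 + w*(0))))) + z*(((4*x10*x20*x12 - 2*x11*x30*x12 - 4*x02*x30*x21) + w*((4*x10*x21*x12 - 8*x20*x02*x21 - 4*x30*x12^2) + w*((- 4*x20*x12^2 + 2*x11*x21*x12 - 4*x02*x21^2) + w*(0 + w*(0))))) + z*(((2*x20^2*x12 - 2*x30*x21*x12) + w*(0 + w*(0 + w*(0 + w*(0))))))))) = 0" using h dec by metis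
  have "\<And>w. ((2*x00*x10*x02 + 6*x00*x20*x03 - 2*x10^2*x03 - 2*x01*x30*x03) + w*((2*x00*x11*x02 + 6*x00*x21*x03 + 2*x10*x01*x02 - 4*x10*x11*x03 + 2*x01*x20*x03 - 4*x02*x30*x03) + w*((2*x00*x02*x12 + 2*x10*x02^2 - 4*x10*x12*x03 + 2*x01*x11*x02 + 4*x01*x21*x03 - 2*x20*x02*x03 - 2*x11^2*x03) + w*((2*x01*x02*x12 + 2*x11*x02^2 - 4*x11*x12*x03 + 2*x02*x21*x03) + w*((2*x02^2*x12 - 2*x12^2*x03)))))) = 0 \<and> ((2*x00*x10*x12 + 16*x00*x20*x02 - 2*x10^2*x02 - 2*x10*x20*x03 - 4*x01*x02*x30 - 2*x11*x30*x03) + w*((2*x00*x11*x12 + 16*x00*x02*x21 + 2*x10*x01*x12 - 4*x10*x11*x02 - 2*x10*x21*x03 + 8*x01*x20*x02 - 6*x20*x11*x03 - 8*x02^2*x30 - 4*x30*x12*x03) + w*((2*x00*x12^2 - 2*x10*x02*x12 + 2*x01*x11*x12 + 12*x01*x02*x21 - 10*x20*x12*x03 - 2*x11^2*x02 - 4*x11*x21*x03) + w*((2*x01*x12^2 - 2*x11*x02*x12 + 8*x02^2*x21 - 6*x21*x12*x03) + w*(0))))) = 0 \<and> ((10*x00*x20*x12 + 2*x10*x20*x02 - 2*x01*x30*x12 - 2*x20^2*x03 - 4*x11*x02*x30 - 2*x30*x21*x03) + w*((10*x00*x21*x12 + 2*x10*x02*x21 + 6*x01*x20*x12 - 6*x20*x11*x02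 - 8*x20*x21*x03 - 12*x02*x30*x12) + w*((8*x01*x21*x12 - 12*x20*x02*x12 - 2*x11*x02*x21 - 4*x21^2*x03) + w*(0 + w*(0))))) = 0 \<and> ((4*x10*x20*x12 - 2*x11*x30*x12 - 4*x02*x30*x21) + w*((4*x10*x21*x12 - 8*x20*x02*x21 - 4*x30*x12^2) + w*((- 4*x20*x12^2 + 2*x11*x21*x12 - 4*x02*x21^2) + w*(0 + w*(0))))) = 0 \<and> ((2*x20^2*x12 - 2*x30*x21*x12) + w*(0 + w*(0 + w*(0 + w*(0))))) = 0"
    by (rule poly5, rule hz)
  hence "\<And>w. ((2*x00*x10*x02 + 6*x00*x20*x03 - 2*x10^2*x03 - 2*x01*x30*x03) + w*((2*x00*x11*x02 + 6*x00*x21*x03 + 2*x10*x01*x02 - 4*x10*x11*x03 + 2*x01*x20*x03 - 4*x02*x30*x03) + w*((2*x00*x02*x12 + 2*x10*x02^2 - 4*x10*x12*x03 + 2*x01*x11*x02 + 4*x01*x21*x03 - 2*x20*x02*x03 - 2*x11^2*x03) + w*((2*x01*x02*x12 + 2*x11*x02^2 - 4*x11*x12*x03 + 2*x02*x21*x03) + w*((2*x02^2*x12 - 2*x12^2*x03)))))) = 0" "\<And>w. ((2*x00*x10*x12 + 16*x00*x20*x02 - 2*x10^2*x02 - 2*x10*x20*x03 - 4*x01*x02*x30 - 2*x11*x30*x03) + w*((2*x00*x11*x12 + 16*x00*x02*x21 + 2*x10*x01*x12 - 4*x10*x11*x02 - 2*x10*x21*x03 + 8*x01*x20*x02 - 6*x20*x11*x03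 - 8*x02^2*x30 - 4*x30*x12*x03) + w*((2*x00*x12^2 - 2*x10*x02*x12 + 2*x01*x11*x12 + 12*x01*x02*x21 - 10*x20*x12*x03 - 2*x11^2*x02 - 4*x11*x21*x03) + w*((2*x01*x12^2 - 2*x11*x02*x12 + 8*x02^2*x21 - 6*x21*x12*x03) + w*(0))))) = 0" "\<And>w. ((10*x00*x20*x12 + 2*x10*x20*x02 - 2*x01*x30*x12 - 2*x20^2*x03 - 4*x11*x02*x30 - 2*x30*x21*x03) + w*((10*x00*x21*x12 + 2*x10*x02*x21 + 6*x01*x20*x12 - 6*x20*x11*x02 - 8*x20*x21*x03 - 12*x02*x30*x12) + w*((8*x01*x21*x12 - 12*x20*x02*x12 - 2*x11*x02*x21 - 4*x21^2*x03) + w*(0 + w*(0))))) = 0" "\<And>w. ((4*x10*x20*x12 - 2*x11*x30*x12 - 4*x02*x30*x21) + w*((4*x10*x21*x12 - 8*x20*x02*x21 - 4*x30*x12^2) + w*((- 4*x20*x12^2 + 2*x11*x21*x12 - 4*x02*x21^2) + w*(0 + w*(0))))) = 0" "\<And>w. ((2*x20^2*x12 - 2*x30*x21*x12) + w*(0 + w*(0 + w*(0 + w*(0))))) = 0" by auto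
  from this[THEN poly5] show ?thesis by simp
qed


lemma Dpol_set: "{(i,j). i \<le> (2::nat) \<and> j \<le> (2::nat) \<and> (i,j) \<noteq> (2,2)} =
  {(0,0),(0,1),(0,2),(1,0),(1,1),(1,2),(2,0),(2,1)}"
  by (auto simp: le_Suc_eq numeral_2_eq_2)

lemma Dpol_eq: "Dpol a z w = a 0 0 + a 1 0 * z + a 0 1 * w + a 2 0 * z^2 + a 1 1 * z * w
   + a 0 2 * w^2 + a 2 1 * z^2 * w + a 1 2 * z * w^2"
  unfolding Dpol_def Dpol_set by (simp add: algebra_simps)

lemma Dz_eq: "Dz a z w = a 1 0 + 2 * a 2 0 * z + a 1 1 * w + 2 * a 2 1 * z * w + a 1 2 * w^2"
  unfolding Dz_def Dpol_eq
  by (rule DERIV_imp_deriv, (rule derivative_eq_intros refl)+, simp add: algebra_simps)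

lemma Dw_eq: "Dw a z w = a 0 1 + a 1 1 * z + 2 * a 0 2 * w + a 2 1 * z^2 + 2 * a 1 2 * z * w"
  unfolding Dw_def Dpol_eq
  by (rule DERIV_imp_deriv, (rule derivative_eq_intros refl)+, simp add: algebra_simps)

lemma Dzz_eq: "Dzz a z w = 2 * a 2 0 + 2 * a 2 1 * w"
  unfolding Dzz_def Dz_eq
  by (rule DERIV_imp_deriv, (rule derivative_eq_intros refl)+, simp add: algebra_simps)

lemma Dww_eq: "Dww a z w = 2 * a 0 2 + 2 * a 1 2 * z"
  unfolding Dww_def Dw_eq
  by (rule DERIV_imp_deriv, (rule derivative_eq_intros refl)+, simp add: algebra_simps)

lemma lp_intro:
  assumes "\<And>z w. f z w = (\<Prod>(c0,c1,c2)\<leftarrow>fs. c0 + c1 * z + c2 * w)"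
  shows "linear_product f"
  unfolding linear_product_def using assms by blast

lemma quad_roots:
  fixes al be ga :: complex
  assumes "al \<noteq> 0"
  shows "\<exists>r1 r2. \<forall>z. al * z^2 + be * z + ga = al * (z - r1) * (z - r2)"
proof -
  define s where "s = csqrt (be^2 - 4*al*ga)"
  have s2: "s^2 = be^2 - 4*al*ga" unfolding s_def by simp
  define r1 where "r1 = (-be + s)/(2*al)"
  define r2 where "r2 = (-be - s)/(2*al)"
  have "al * z^2 + be * z + ga = al * (z - r1) * (z - r2)" for z
  proof -
    have "al * (z - r1) * (z - r2) = al*z^2 - al*(r1+r2)*z + al*r1*r2" by (simp add: algebra_simps power2_eq_square)
    also have "al*(r1+r2) = -be" unfolding r1_def r2_def using assms by (simp add: field_simps)
    also have "al*r1*r2 = (be^2 - s^2)/(4*al)" unfolding r1_def r2_def using assms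
      by (simp add: field_simps power2_eq_square)
    also have "(be^2 - s^2)/(4*al) = ga" using assms s2 by (simp add: field_simps)
    finally show ?thesis by simp
  qed
  thus ?thesis by blast
qed

lemma lp_quad_z:
  fixes al be ga :: complex
  assumes "\<And>z w. f z w = al * z^2 + be * z + ga"
  shows "linear_product f"
proof (cases "al = 0")
  case True
  show ?thesis by (rule lp_intro[of _ "[(ga, be, 0)]"]) (simp add: assms True)
next
  case False
  then obtain r1 r2 where r: "\<And>z. al * z^2 + be * z + ga = al * (z - r1) * (z - r2)"
    using quad_roots by blast
  show ?thesis by (rule lp_intro[of _ "[(al,0,0),(-r1,1,0),(-r2,1,0)]"]) (simp only: assms r, simp add: algebra_simps)
qed

lemma lp_quad_w:
  fixes al be ga :: complex
  assumes "\<And>z w. f z w = al * w^2 + be * w + ga"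
  shows "linear_product f"
proof (cases "al = 0")
  case True
  show ?thesis by (rule lp_intro[of _ "[(ga, 0, be)]"]) (simp add: assms True)
next
  case False
  then obtain r1 r2 where r: "\<And>z. al * z^2 + be * z + ga = al * (z - r1) * (z - r2)"
    using quad_roots by blast
  show ?thesis by (rule lp_intro[of _ "[(al,0,0),(-r1,0,1),(-r2,0,1)]"]) (simp only: assms r, simp add: algebra_simps)
qed

theorem lemma4p1:
  fixes a :: "nat \<Rightarrow> nat \<Rightarrow> complex"
  assumes "proj_point a"
    and "pluecker a"
    and "SIC a"
  shows "linear_product (Dpol a)"
proof -
  have h1: "\<And>z w. 3*((a 2 1)*w^2 + 2*(a 2 0)*w + (a 3 0))*((a 0 0) + (a 1 0)*z + (a 0 1)*w + (a 2 0)*z^2 + (a 1 1)*z*w + (a 0 2)*w^2 + (a 2 1)*z^2*w + (a 1 2)*z*w^2)*(2*(a 0 2) + 2*(a 1 2)*z) - 2*((a 2 1)*w^2 + 2*(a 2 0)*w + (a 3 0))*((a 1 2)*z^2 + 2*(a 0 2)*z + (a 0 3))*((a 1 0) + 2*(a 2 0)*z + (a 1 1)*w + 2*(a 2 1)*z*w + (a 1 2)*w^2) - 2*((a 2 1)*w^2 + 2*(a 2 0)*w + (a 3 0))*((a 0 1) + (a 1 1)*z + 2*(a 0 2)*w + (a 2 1)*z^2 + 2*(a 1 2)*z*w)^2 + ((a 0 0) + (a 1 0)*z + (a 0 1)*w + (a 2 0)*z^2 + (a 1 1)*z*w + (a 0 2)*w^2 + (a 2 1)*z^2*w + (a 1 2)*z*w^2)*((a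 0 1) + (a 1 1)*z + 2*(a 0 2)*w + (a 2 1)*z^2 + 2*(a 1 2)*z*w)*(2*(a 2 0) + 2*(a 2 1)*w) = 0"
    using assms(3) unfolding SIC_def Dpol_eq Dz_eq Dw_eq Dzz_eq Dww_eq Az_def Bw_def by blast
  have h2: "\<And>z w. 3*((a 1 2)*z^2 + 2*(a 0 2)*z + (a 0 3))*((a 0 0) + (a 1 0)*z + (a 0 1)*w + (a 2 0)*z^2 + (a 1 1)*z*w + (a 0 2)*w^2 + (a 2 1)*z^2*w + (a 1 2)*z*w^2)*(2*(a 2 0) + 2*(a 2 1)*w) - 2*((a 2 1)*w^2 + 2*(a 2 0)*w + (a 3 0))*((a 1 2)*z^2 + 2*(a 0 2)*z + (a 0 3))*((a 0 1) + (a 1 1)*z + 2*(a 0 2)*w + (a 2 1)*z^2 + 2*(a 1 2)*z*w) - 2*((a 1 2)*z^2 + 2*(a 0 2)*z + (a 0 3))*((a 1 0) + 2*(a 2 0)*z + (a 1 1)*w + 2*(a 2 1)*z*w + (a 1 2)*w^2)^2 + ((a 0 0) + (a 1 0)*z + (a 0 1)*w + (a 2 0)*z^2 + (a 1 1)*z*w + (a 0 2)*w^2 + (a 2 1)*z^2*w + (a 1 2)*z*w^2)*((a 1 0) + 2*(a 2 0)*z + (a 1 1)*w + 2*(a 2 1)*z*w + (a 1 2)*w^2)*(2*(a 0 2) + 2*(a 1 2)*z) = 0"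
    using assms(3) unfolding SIC_def Dpol_eq Dz_eq Dw_eq Dzz_eq Dww_eq Az_def Bw_def by blast
  have e140: "(2*(a 2 0)^2*(a 2 1) - 2*(a 3 0)*(a 2 1)^2) = 0" using E1_coeffs[OF h1] by blast
  have e104: "(2*(a 0 2)^2*(a 2 1) - 2*(a 2 1)*(a 1 2)*(a 0 3)) = 0" using E1_coeffs[OF h1] by blast
  have e123: "(- 4*(a 2 0)*(a 1 2)^2 + 2*(a 1 1)*(a 2 1)*(a 1 2) - 4*(a 0 2)*(a 2 1)^2) = 0" using E1_coeffs[OF h1] by blast
  have e120: "(2*(a 0 0)*(a 2 0)*(a 2 1) + 2*(a 1 0)*(a 2 0)*(a 1 1) + 4*(a 1 0)*(a 3 0)*(a 1 2) + 2*(a 0 1)*(a 2 0)^2 - 4*(a 0 1)*(a 3 0)*(a 2 1) - 2*(a 2 0)*(a 0 2)*(a 3 0) - 2*(a 1 1)^2*(a 3 0)) = 0" using E1_coeffs[OF h1] by blast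
  have e101: "(2*(a 0 0)*(a 0 1)*(a 2 1) + 16*(a 0 0)*(a 2 0)*(a 0 2) - 4*(a 1 0)*(a 2 0)*(a 0 3) - 2*(a 0 1)^2*(a 2 0) - 2*(a 0 1)*(a 0 2)*(a 3 0) - 2*(a 1 1)*(a 3 0)*(a 0 3)) = 0" using E1_coeffs[OF h1] by blast
  have e240: "(2*(a 2 0)^2*(a 1 2) - 2*(a 3 0)*(a 2 1)*(a 1 2)) = 0" using E2_coeffs[OF h2] by blast
  have e204: "(2*(a 0 2)^2*(a 1 2) - 2*(a 1 2)^2*(a 0 3)) = 0" using E2_coeffs[OF h2] by blast
  have P1: "a 0 3 * a 2 1 - a 0 2 * a 1 1 + a 0 1 * a 1 2 = 0"
   and P2: "a 0 3 * a 2 0 - a 0 2 * a 1 0 + a 0 0 * a 1 2 = 0"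
   and P3: "a 0 3 * a 3 0 - a 0 1 * a 1 0 + a 0 0 * a 1 1 = 0"
   and P4: "a 0 2 * a 3 0 - a 0 1 * a 2 0 + a 0 0 * a 2 1 = 0"
   and P5: "a 1 2 * a 3 0 - a 1 1 * a 2 0 + a 1 0 * a 2 1 = 0"
    using assms(2) unfolding pluecker_def by auto
  show ?thesis
  proof (cases "a 2 1 = 0")
    case n21: False
    show ?thesis
    proof (cases "a 1 2 = 0")
      case n12: False
      have "a 2 1 * (a 2 0^2 - a 3 0 * a 2 1) = 0" using e140 by algebra
      hence s30: "a 3 0 = a 2 0^2 / a 2 1" using n21 by (simp add: field_simps)
      have "a 1 2 * (a 0 2^2 - a 0 3 * a 1 2) = 0" using e204 by algebra
      hence s03: "a 0 3 = a 0 2^2 / a 1 2" using n12 by (simp add: field_simps)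
      have "a 2 1 * a 1 2 * a 1 1 = 2*a 2 0*a 1 2^2 + 2*a 0 2*a 2 1^2" using e123 by algebra
      hence s11: "a 1 1 = 2*a 2 0*a 1 2/a 2 1 + 2*a 0 2*a 2 1/a 1 2" using n12 n21
        by (simp add: field_simps power2_eq_square)
      have s10: "a 1 0 = (a 1 1 * a 2 0 - a 1 2 * a 3 0)/a 2 1" using P5 n21 by (simp add: field_simps)
      have s01: "a 0 1 = (a 0 2 * a 1 1 - a 0 3 * a 2 1)/a 1 2" using P1 n12 by (simp add: field_simps)
      have s00: "a 0 0 = (a 0 2 * a 1 0 - a 0 3 * a 2 0)/a 1 2" using P2 n12 by (simp add: field_simps)
      show ?thesis
      proof (rule lp_intro[of _ "[(a 0 2/a 1 2, 1, 0), (a 2 0/a 2 1, 0, 1),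
          (a 2 1*a 0 2/a 1 2 + a 1 2*a 2 0/a 2 1, a 2 1, a 1 2)]"])
        fix z w
        show "Dpol a z w = (\<Prod>(c0,c1,c2)\<leftarrow>[(a 0 2/a 1 2, 1, 0), (a 2 0/a 2 1, 0, 1),
          (a 2 1*a 0 2/a 1 2 + a 1 2*a 2 0/a 2 1, a 2 1, a 1 2)]. c0 + c1 * z + c2 * w)"
          unfolding Dpol_eq
          apply (simp only: s00 s10 s01)
          apply (simp only: s11 s30 s03)
          using n12 n21 by (simp add: field_simps power2_eq_square)
      qed
    next
      case z12: True
      have z02: "a 0 2 = 0" using e104 z12 n21 by simp
      have s10: "a 1 0 = a 1 1 * a 2 0/a 2 1" using P5 n21 z12 by (simp add: field_simps)
      have s00: "a 0 0 = a 0 1 * a 2 0/a 2 1" using P4 n21 z02 by (simp add: field_simps)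
      obtain r1 r2 where r: "\<And>z. a 2 1 * z^2 + a 1 1 * z + a 0 1 = a 2 1 * (z - r1) * (z - r2)"
        using quad_roots[OF n21] by blast
      have D1: "Dpol a z w = (a 2 0/a 2 1 + w) * (a 2 1 * z^2 + a 1 1 * z + a 0 1)" for z w
        unfolding Dpol_eq s10 s00 z12 z02 using n21 by (simp add: field_simps power2_eq_square)
      show ?thesis
        by (rule lp_intro[of _ "[(a 2 0/a 2 1, 0, 1), (a 2 1,0,0), (-r1,1,0), (-r2,1,0)]"])
          (simp only: D1 r, simp add: algebra_simps)
    qed
  next
    case z21: True
    show ?thesis
    proof (cases "a 1 2 = 0")
      case n12: False
      have z20: "a 2 0 = 0" using e240 z21 n12 by simp
      have s01: "a 0 1 = a 0 2 * a 1 1/a 1 2" using P1 n12 z21 by (simp add: field_simps)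
      have s00: "a 0 0 = a 0 2 * a 1 0/a 1 2" using P2 n12 z20 by (simp add: field_simps)
      obtain r1 r2 where r: "\<And>w. a 1 2 * w^2 + a 1 1 * w + a 1 0 = a 1 2 * (w - r1) * (w - r2)"
        using quad_roots[OF n12] by blast
      have D1: "Dpol a z w = (a 0 2/a 1 2 + z) * (a 1 2 * w^2 + a 1 1 * w + a 1 0)" for z w
        unfolding Dpol_eq s01 s00 z21 z20 using n12 by (simp add: field_simps power2_eq_square)
      show ?thesis
        by (rule lp_intro[of _ "[(a 0 2/a 1 2, 1, 0), (a 1 2,0,0), (-r1,0,1), (-r2,0,1)]"])
          (simp only: D1 r, simp add: algebra_simps)
    next
      case z12: True
      show ?thesis
      proof (cases "a 1 1 = 0")
        case n11: False
        have z02: "a 0 2 = 0" using P1 z21 z12 n11 by simp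
        have z20: "a 2 0 = 0" using P5 z21 z12 n11 by simp
        have z30: "a 3 0 = 0" using e120 z21 z12 z20 z02 n11 by simp
        have s00: "a 0 0 = a 0 1 * a 1 0 / a 1 1" using P3 z30 n11 by (simp add: field_simps)
        show ?thesis
        proof (rule lp_intro[of _ "[(1/a 1 1,0,0),(a 0 1,a 1 1,0),(a 1 0,0,a 1 1)]"])
          fix z w
          show "Dpol a z w = (\<Prod>(c0,c1,c2)\<leftarrow>[(1/a 1 1,0,0),(a 0 1,a 1 1,0),(a 1 0,0,a 1 1)]. c0 + c1 * z + c2 * w)"
            unfolding Dpol_eq s00 z21 z12 z20 z02 using n11 by (simp add: field_simps)
        qed
      next
        case z11: True
        show ?thesis
        proof (cases "a 2 0 = 0")
          case n20: False
          show ?thesis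
          proof (cases "a 0 2 = 0")
            case n02: False
            have q2: "a 0 3 * a 2 0 = a 0 2 * a 1 0" using P2 z12 by simp
            have q4: "a 0 2 * a 3 0 = a 0 1 * a 2 0" using P4 z21 by simp
            have "16*a 0 0*a 2 0*a 0 2 - 4*a 1 0*(a 2 0*a 0 3) - 2*a 0 1^2*a 2 0 - 2*a 0 1*(a 0 2*a 3 0) = 0"
              using e101 z21 z11 by (simp add: algebra_simps power2_eq_square)
            hence "16*a 0 0*a 2 0*a 0 2 - 4*a 1 0^2*a 0 2 - 4*a 0 1^2*a 2 0 = 0"
              unfolding q4 q2[unfolded mult.commute[of "a 0 3"]] by (simp add: algebra_simps power2_eq_square)
            hence "4*a 0 0*a 2 0*a 0 2 = a 1 0^2*a 0 2 + a 0 1^2*a 2 0" by algebra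
            hence s00: "a 0 0 = a 1 0^2/(4*a 2 0) + a 0 1^2/(4*a 0 2)" using n20 n02
              by (simp add: field_simps power2_eq_square)
            define s where "s = csqrt (a 2 0)"
            define t where "t = csqrt (a 0 2)"
            define p where "p = a 1 0/(2*a 2 0)"
            define q where "q = a 0 1/(2*a 0 2)"
            have ss: "s^2 = a 2 0" unfolding s_def by simp
            have tt: "t^2 = a 0 2" unfolding t_def by simp
            show ?thesis
            proof (rule lp_intro[of _ "[(s*p + \<i>*t*q, s, \<i>*t), (s*p - \<i>*t*q, s, -\<i>*t)]"])
              fix z w
              have "(s*p + \<i>*t*q + s*z + \<i>*t*w) * (s*p - \<i>*t*q + s*z + -\<i>*t*w)
                   = s^2*(z+p)^2 - \<i>^2*t^2*(w+q)^2" by algebra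
              also have "\<dots> = a 2 0*(z+p)^2 + a 0 2*(w+q)^2" using ss tt by simp
              also have "\<dots> = Dpol a z w"
                unfolding Dpol_eq s00 z21 z12 z11 p_def q_def using n20 n02
                by (simp add: field_simps power2_eq_square)
              finally show "Dpol a z w = (\<Prod>(c0,c1,c2)\<leftarrow>[(s*p + \<i>*t*q, s, \<i>*t), (s*p - \<i>*t*q, s, -\<i>*t)]. c0 + c1 * z + c2 * w)"
                by simp
            qed
          next
            case z02: True
            have z01: "a 0 1 = 0" using P4 z21 z02 n20 by simp
            show ?thesis
              by (rule lp_quad_z[of _ "a 2 0" "a 1 0" "a 0 0"])
                (simp only: Dpol_eq z21 z12 z11 z02 z01, simp add: algebra_simps)
          qed
        next
          case z20: True
          show ?thesis
          proof (cases "a 0 2 = 0")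
            case n02: False
            have z10: "a 1 0 = 0" using P2 z12 z20 n02 by simp
            show ?thesis
              by (rule lp_quad_w[of _ "a 0 2" "a 0 1" "a 0 0"])
                (simp only: Dpol_eq z21 z12 z11 z20 z10, simp add: algebra_simps)
          next
            case z02: True
            show ?thesis
              by (rule lp_intro[of _ "[(a 0 0, a 1 0, a 0 1)]"])
                (simp only: Dpol_eq z21 z12 z11 z20 z02, simp)
          qed
        qed
      qed
    qed
  qed
qed

end
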